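(* Let $k_1,k_2,m$ be nonnegative integers with $k_1\le k_2$ and $k_1+k_2-m\le\dim V$. Let $Y_1\in\mathcal H_{k_1-m}$ and $X_2\in\mathcal H_{k_2}$ be subspaces whose intersection is a single point. Then the following are equivalent: (i) $Y_1\perp^{*}X_2$ (equivalently, $Y_1\perp_x X_2$); (ii) $X_1\perp^{*}X_2$ for every $X_1\in\mathcal H_{k_1}$ such that $Y_1\subset X_1$ and $\dim(X_1\cap X_2)=m$.
   Context: Let $V$ be a vector space over a field with a nondegenerate symmetric bilinear form $\xi$ having no isotropic vectors. Points are elements of $V$; (affine) subspaces are sets $p+W$ with $W$ a linear subspace, of dimension $\dim W$. $\mathcal H_k$ denotes the family of $k$-dimensional subspaces. $X_1\sqcup X_2$ denotes the least subspace containing $X_1\cup X_2$. For nonempty subspaces $X,Y$: $X\perp Y$ iff $\xi(b-a,d-c)=0$ for all $a,b\in X$, $c,d\in Y$; $X\perp_x Y$ iff $X\perp Y$ and $X\cap Y\neq\emptyset$. $X_1\perp^{\circ}X_2$ iff there are a point $q\in X_1\cap X_2$ and subspaces $Z_1,Z_2$ with $q\in Z_1,Z_2$, $Z_i\perp_x X_1\cap X_2$, $Z_1\perp_x Z_2$, and $(X_1\cap X_2)\sqcup Z_i=X_i$ for $i=1,2$. $X_1\perp^{*}X_2$ iff $X_1\perp^{\circ}X_2$ and $X_1\cap X_2$ is different from both $X_1$ and $X_2$. *)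

theory Defs
  imports Main "HOL.Vector_Spaces"
begin

text \<open>Setting: a vector space V (the carrier type 'b) over a field 'a, given by the
scalar multiplication scale (locale vector_space), and a bilinear form xi.\<close>

definition sym_bilinear_form :: "('a::field \<Rightarrow> 'b::ab_group_add \<Rightarrow> 'b) \<Rightarrow> ('b \<Rightarrow> 'b \<Rightarrow> 'a) \<Rightarrow> bool" where
  "sym_bilinear_form scale xi \<longleftrightarrow>
     (\<forall>x y z. xi (x + y) z = xi x z + xi y z) \<and>
     (\<forall>x y z. xi x (y + z) = xi x y + xi x z) \<and>
     (\<forall>c x y. xi (scale c x) y = c * xi x y) \<and>
     (\<forall>c x y. xi x (scale c y) = c * xi x y) \<and>
     (\<forall>x y. xi x y = xi y x)"

definition nondegenerate_form :: "('b::ab_group_add \<Rightarrow> 'b \<Rightarrow> 'a::field) \<Rightarrow> bool" where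
  "nondegenerate_form xi \<longleftrightarrow> (\<forall>v. (\<forall>w. xi v w = 0) \<longrightarrow> v = 0)"

definition no_isotropic :: "('b::ab_group_add \<Rightarrow> 'b \<Rightarrow> 'a::field) \<Rightarrow> bool" where
  "no_isotropic xi \<longleftrightarrow> (\<forall>v. xi v v = 0 \<longrightarrow> v = 0)"

text \<open>dim V \<ge> n: V contains n linearly independent vectors (covers infinite dimension).\<close>
definition dim_ge :: "('a::field \<Rightarrow> 'b::ab_group_add \<Rightarrow> 'b) \<Rightarrow> nat \<Rightarrow> bool" where
  "dim_ge scale n \<longleftrightarrow> (\<exists>B. finite B \<and> \<not> module.dependent scale B \<and> card B = n)"

definition is_sub :: "('a::field \<Rightarrow> 'b::ab_group_add \<Rightarrow> 'b) \<Rightarrow> 'b set \<Rightarrow> bool" where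
  "is_sub scale X \<longleftrightarrow> (\<exists>p W. module.subspace scale W \<and> X = (\<lambda>w. p + w) ` W)"

definition Hk :: "('a::field \<Rightarrow> 'b::ab_group_add \<Rightarrow> 'b) \<Rightarrow> nat \<Rightarrow> 'b set set" where
  "Hk scale k = {X. \<exists>p B. finite B \<and> \<not> module.dependent scale B \<and> card B = k \<and>
                       X = (\<lambda>w. p + w) ` module.span scale B}"

definition join :: "('a::field \<Rightarrow> 'b::ab_group_add \<Rightarrow> 'b) \<Rightarrow> 'b set \<Rightarrow> 'b set \<Rightarrow> 'b set" where
  "join scale X1 X2 = \<Inter>{Y. is_sub scale Y \<and> X1 \<union> X2 \<subseteq> Y}"

definition perp :: "('b::ab_group_add \<Rightarrow> 'b \<Rightarrow> 'a::field) \<Rightarrow> 'b set \<Rightarrow> 'b set \<Rightarrow> bool" where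
  "perp xi X Y \<longleftrightarrow> X \<noteq> {} \<and> Y \<noteq> {} \<and>
     (\<forall>a\<in>X. \<forall>b\<in>X. \<forall>c\<in>Y. \<forall>d\<in>Y. xi (b - a) (d - c) = 0)"

definition perp_x :: "('b::ab_group_add \<Rightarrow> 'b \<Rightarrow> 'a::field) \<Rightarrow> 'b set \<Rightarrow> 'b set \<Rightarrow> bool" where
  "perp_x xi X Y \<longleftrightarrow> perp xi X Y \<and> X \<inter> Y \<noteq> {}"

definition perp_circ :: "('a::field \<Rightarrow> 'b::ab_group_add \<Rightarrow> 'b) \<Rightarrow> ('b \<Rightarrow> 'b \<Rightarrow> 'a) \<Rightarrow> 'b set \<Rightarrow> 'b set \<Rightarrow> bool" where
  "perp_circ scale xi X1 X2 \<longleftrightarrow>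
     (\<exists>q \<in> X1 \<inter> X2. \<exists>Z1 Z2. is_sub scale Z1 \<and> is_sub scale Z2 \<and> q \<in> Z1 \<and> q \<in> Z2 \<and>
        perp_x xi Z1 (X1 \<inter> X2) \<and> perp_x xi Z2 (X1 \<inter> X2) \<and> perp_x xi Z1 Z2 \<and>
        join scale (X1 \<inter> X2) Z1 = X1 \<and> join scale (X1 \<inter> X2) Z2 = X2)"

definition perp_star :: "('a::field \<Rightarrow> 'b::ab_group_add \<Rightarrow> 'b) \<Rightarrow> ('b \<Rightarrow> 'b \<Rightarrow> 'a) \<Rightarrow> 'b set \<Rightarrow> 'b set \<Rightarrow> bool" where
  "perp_star scale xi X1 X2 \<longleftrightarrow> perp_circ scale xi X1 X2 \<and> X1 \<inter> X2 \<noteq> X1 \<and> X1 \<inter> X2 \<noteq> X2"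

end

theory Submission
  imports Defs
begin


locale bform = vector_space scale for scale :: "'a::field \<Rightarrow> 'b::ab_group_add \<Rightarrow> 'b" +
  fixes xi :: "'b \<Rightarrow> 'b \<Rightarrow> 'a"
  assumes bil: "sym_bilinear_form scale xi" and aniso: "no_isotropic xi"
begin

lemma xi_addl: "xi (x + y) z = xi x z + xi y z" using bil unfolding sym_bilinear_form_def by blast
lemma xi_addr: "xi x (y + z) = xi x y + xi x z" using bil unfolding sym_bilinear_form_def by blast
lemma xi_scalel: "xi (scale c x) y = c * xi x y" using bil unfolding sym_bilinear_form_def by blast
lemma xi_scaler: "xi x (scale c y) = c * xi x y" using bil unfolding sym_bilinear_form_def by blast
lemma xi_sym: "xi x y = xi y x" using bil unfolding sym_bilinear_form_def by blast
lemma xi_0l[simp]: "xi 0 y = 0"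
proof -
  have "xi 0 y + xi 0 y = xi 0 y + 0" using xi_addl[of 0 0 y] by simp
  then show ?thesis by (rule add_left_imp_eq)
qed
lemma xi_0r[simp]: "xi y 0 = 0" using xi_0l xi_sym by metis
lemma xi_diffl: "xi (x - y) z = xi x z - xi y z"
  using xi_addl[of "x - y" y z] by (simp add: eq_diff_eq)
lemma xi_diffr: "xi z (x - y) = xi z x - xi z y"
  using xi_addr[of z "x - y" y] by (simp add: eq_diff_eq)
lemma xi_self: "xi v v = 0 \<Longrightarrow> v = 0" using aniso unfolding no_isotropic_def by blast

lemma subspace_orth: "subspace {x. xi v x = 0}"
  by (rule subspaceI) (auto simp: xi_addr xi_scaler)

lemma orth_span: "(\<And>c. c \<in> C \<Longrightarrow> xi v c = 0) \<Longrightarrow> x \<in> span C \<Longrightarrow> xi v x = 0"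
  using span_minimal[of C "{x. xi v x = 0}"] subspace_orth by blast

lemma proj: "finite C \<Longrightarrow> \<exists>d\<in>span C. \<forall>c\<in>C. xi (v - d) c = 0"
proof (induction C arbitrary: v rule: finite_induct)
  case empty then show ?case using span_zero by blast
next
  case (insert c C)
  obtain d0 where d0: "d0 \<in> span C" "\<forall>x\<in>C. xi (v - d0) x = 0" using insert.IH by blast
  obtain e where e: "e \<in> span C" "\<forall>x\<in>C. xi (c - e) x = 0" using insert.IH by blast
  have d0s: "xi (v - d0) y = 0" if "y \<in> span C" for y using orth_span d0(2) that by blast
  show ?case
  proof (cases "c - e = 0")
    case True
    then have "c = e" by simp
    then have "xi (v - d0) c = 0" using d0s e(1) by simp
    then show ?thesis using d0 span_mono[of C "insert c C"] by auto
  next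
    case False
    define c' where "c' = c - e"
    have nz: "xi c' c' \<noteq> 0" using False xi_self c'_def by blast
    define t where "t = xi (v - d0) c' / xi c' c'"
    define d where "d = d0 + scale t c'"
    have c'C: "xi c' y = 0" if "y \<in> span C" for y using orth_span e(2) that c'_def by blast
    have ds: "d \<in> span (insert c C)"
      unfolding d_def c'_def
      by (meson d0(1) e(1) in_mono span_add span_base span_diff span_mono span_scale insertI1 subset_insertI)
    have vd: "v - d = (v - d0) - scale t c'" by (simp add: d_def)
    have A: "xi (v - d) y = 0" if "y \<in> span C" for y
      using d0s[OF that] c'C[OF that] by (simp add: vd xi_diffl xi_scalel)
    have B: "xi (v - d) c' = 0"
      unfolding vd xi_diffl xi_scalel t_def using nz by simp
    have C: "xi (v - d) c = 0"
    proof -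
      have "c = c' + e" by (simp add: c'_def)
      then have "xi (v - d) c = xi (v - d) c' + xi (v - d) e" using xi_addr by metis
      then show ?thesis using B A[OF e(1)] by simp
    qed
    show ?thesis using ds A C span_base by (intro bexI[of _ d]) auto
  qed
qed

end


definition tr :: "'b::ab_group_add \<Rightarrow> 'b set \<Rightarrow> 'b set" where "tr p W = (\<lambda>w. p + w) ` W"

context vector_space begin

lemma mem_tr: "x \<in> tr p W \<longleftrightarrow> x - p \<in> W"
  unfolding tr_def by (auto simp: image_iff) (metis add.commute diff_add_cancel)

lemma tr_p: "subspace W \<Longrightarrow> p \<in> tr p W"
  by (simp add: mem_tr subspace_0)

lemma tr_rebase: "subspace W \<Longrightarrow> q \<in> tr p W \<Longrightarrow> tr q W = tr p W"
proof -
  assume W: "subspace W" and q: "q \<in> tr p W"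
  have "x - q \<in> W \<longleftrightarrow> x - p \<in> W" for x
  proof -
    have qp: "q - p \<in> W" using q by (simp add: mem_tr)
    have "x - p = (x - q) + (q - p)" "x - q = (x - p) - (q - p)" by simp_all
    then show ?thesis using qp W subspace_add subspace_diff by metis
  qed
  then show ?thesis by (auto simp: mem_tr)
qed

lemma tr_inj: "tr p W = tr p W' \<Longrightarrow> W = W'"
  unfolding set_eq_iff mem_tr by (metis add_diff_cancel_left')

lemma tr_inter: "tr p W \<inter> tr p W' = tr p (W \<inter> W')"
  by (auto simp: mem_tr)

lemma tr_0: "tr p {0} = {p}"
  unfolding set_eq_iff mem_tr by auto

lemma tr_mono: "W \<subseteq> W' \<Longrightarrow> tr p W \<subseteq> tr p W'"
  by (auto simp: mem_tr)

lemma tr_subset_iff: "tr p W \<subseteq> tr p W' \<longleftrightarrow> W \<subseteq> W'"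
proof
  assume h: "tr p W \<subseteq> tr p W'"
  show "W \<subseteq> W'"
  proof
    fix w assume "w \<in> W"
    then have "p + w \<in> tr p W" by (simp add: mem_tr)
    then have "p + w \<in> tr p W'" using h by blast
    then show "w \<in> W'" by (simp add: mem_tr)
  qed
qed (rule tr_mono)

lemma is_sub_tr: "subspace W \<Longrightarrow> is_sub scale (tr p W)"
  unfolding is_sub_def tr_def by blast

lemma is_sub_at: "is_sub scale X \<Longrightarrow> q \<in> X \<Longrightarrow> \<exists>W. subspace W \<and> X = tr q W"
proof -
  assume "is_sub scale X" "q \<in> X"
  then obtain p W where "subspace W" "X = tr p W" unfolding is_sub_def tr_def by blast
  then show ?thesis using tr_rebase \<open>q \<in> X\<close> by metis
qed

lemma Hk_at: "X \<in> Hk scale k \<Longrightarrow> q \<in> X \<Longrightarrow>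
   \<exists>B. finite B \<and> independent B \<and> card B = k \<and> X = tr q (span B)"
proof -
  assume "X \<in> Hk scale k" "q \<in> X"
  then obtain p B where "finite B" "independent B" "card B = k" "X = tr p (span B)"
    unfolding Hk_def tr_def by blast
  then show ?thesis using tr_rebase[OF subspace_span] \<open>q \<in> X\<close> by metis
qed

lemma Hk_I: "finite B \<Longrightarrow> independent B \<Longrightarrow> card B = k \<Longrightarrow> tr q (span B) \<in> Hk scale k"
  unfolding Hk_def tr_def by blast

lemma join_tr: assumes "subspace S" "subspace T"
  shows "join scale (tr q S) (tr q T) = tr q (span (S \<union> T))"
proof
  have "S \<subseteq> span (S \<union> T)" "T \<subseteq> span (S \<union> T)" using span_superset by blast+
  then have "tr q S \<subseteq> tr q (span (S \<union> T))" "tr q T \<subseteq> tr q (span (S \<union> T))"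
    using tr_mono by blast+
  then have "tr q (span (S \<union> T)) \<in> {Y. is_sub scale Y \<and> tr q S \<union> tr q T \<subseteq> Y}"
    using is_sub_tr[OF subspace_span] by blast
  then show "join scale (tr q S) (tr q T) \<subseteq> tr q (span (S \<union> T))"
    unfolding join_def by (rule Inter_lower)
next
  show "tr q (span (S \<union> T)) \<subseteq> join scale (tr q S) (tr q T)"
    unfolding join_def
  proof (rule Inter_greatest)
    fix Y assume "Y \<in> {Y. is_sub scale Y \<and> tr q S \<union> tr q T \<subseteq> Y}"
    then have Y: "is_sub scale Y" "tr q S \<union> tr q T \<subseteq> Y" by simp_all
    have "q \<in> tr q S" using tr_p[OF assms(1)] .
    then have "q \<in> Y" using Y(2) by blast
    then obtain W where W: "subspace W" "Y = tr q W" using is_sub_at Y(1) by blast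
    have "tr q S \<subseteq> tr q W" "tr q T \<subseteq> tr q W" using Y(2) unfolding W(2) by auto
    then have "S \<subseteq> W" "T \<subseteq> W" unfolding tr_subset_iff .
    then have "span (S \<union> T) \<subseteq> W" using span_minimal[OF _ W(1)] by blast
    then show "tr q (span (S \<union> T)) \<subseteq> Y" unfolding W(2) by (rule tr_mono)
  qed
qed

lemma span_sub_Un: assumes "subspace S" "subspace T" "x \<in> span (S \<union> T)"
  obtains a b where "a \<in> S" "b \<in> T" "x = a + b"
proof -
  have "x \<in> {x + y | x y. x \<in> span S \<and> y \<in> span T}" using assms(3) span_Un by blast
  moreover have "span S = S" "span T = T" using assms(1,2) span_eq_iff by auto
  ultimately show ?thesis using that by auto
qed

lemma card_span_eq: "independent B \<Longrightarrow> independent B' \<Longrightarrow> span B = span B' \<Longrightarrow> card B = card B'"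
  by (metis dim_span_eq_card_independent)

lemma span_eq_card: assumes "independent S" "finite B" "S \<subseteq> span B" "card S = card B"
  shows "span S = span B"
proof
  show "span S \<subseteq> span B" using assms(3) by (metis span_minimal subspace_span)
  have fS: "finite S" using independent_span_bound assms by blast
  have "B \<subseteq> span S"
  proof
    fix b assume b: "b \<in> B"
    show "b \<in> span S"
    proof (rule ccontr)
      assume nb: "b \<notin> span S"
      then have "independent (insert b S)" using independent_insertI assms(1) by blast
      moreover have "insert b S \<subseteq> span B" using b assms(3) span_base by blast
      ultimately have "card (insert b S) \<le> card B" using independent_span_bound assms(2) by blast
      moreover have "b \<notin> S" using nb span_base by blast
      ultimately show False using fS assms(4) by simp
    qed
  qed
  then show "span B \<subseteq> span S" by (metis span_minimal subspace_span)
qed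

lemma indep_union: assumes "independent A" "independent C" "finite C" "span A \<inter> span C \<subseteq> {0}"
  shows "independent (A \<union> C)"
  using assms(3,2,4)
proof (induction C rule: finite_induct)
  case empty then show ?case using assms(1) by simp
next
  case (insert c C)
  have iC: "independent C" using insert.prems(1) independent_mono by blast
  have cC: "c \<notin> span C" using insert.prems(1) insert.hyps(2) by (metis independent_insert)
  have sub: "span A \<inter> span C \<subseteq> {0}" using insert.prems(2) span_mono[of C "insert c C"] by blast
  have IH: "independent (A \<union> C)" using insert.IH iC sub by blast
  have "c \<notin> span (A \<union> C)"
  proof
    assume "c \<in> span (A \<union> C)"
    then obtain a b where ab: "a \<in> span A" "b \<in> span C" "c = a + b" using span_Un by blast
    have "a = c - b" using ab by simp
    moreover have "c - b \<in> span (insert c C)"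
      by (meson ab(2) in_mono span_base span_diff span_mono insertI1 subset_insertI)
    ultimately have "a = 0" using insert.prems(2) ab(1) by blast
    then show False using ab cC by simp
  qed
  then have "independent (insert c (A \<union> C))" using IH by (rule independent_insertI)
  then show ?case by (metis Un_insert_right)
qed

end

context bform begin

lemma perp_tr: assumes "subspace W" "subspace W'"
  shows "perp xi (tr p W) (tr q W') \<longleftrightarrow> (\<forall>a\<in>W. \<forall>b\<in>W'. xi a b = 0)"
proof
  assume h: "perp xi (tr p W) (tr q W')"
  show "\<forall>a\<in>W. \<forall>b\<in>W'. xi a b = 0"
  proof (intro ballI)
    fix a b assume "a \<in> W" "b \<in> W'"
    then have "p \<in> tr p W" "p + a \<in> tr p W" "q \<in> tr q W'" "q + b \<in> tr q W'"
      using assms by (auto simp: mem_tr subspace_0)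
    then have "xi ((p + a) - p) ((q + b) - q) = 0" using h unfolding perp_def by blast
    then show "xi a b = 0" by simp
  qed
next
  assume h: "\<forall>a\<in>W. \<forall>b\<in>W'. xi a b = 0"
  have "tr p W \<noteq> {}" "tr q W' \<noteq> {}" using tr_p assms by blast+
  moreover have "xi (b - a) (d - c) = 0" if "a \<in> tr p W" "b \<in> tr p W" "c \<in> tr q W'" "d \<in> tr q W'" for a b c d
  proof -
    have e: "b - a = (b - p) - (a - p)" "d - c = (d - q) - (c - q)" by simp_all
    have m: "b - p \<in> W" "a - p \<in> W" "d - q \<in> W'" "c - q \<in> W'" using that by (simp_all add: mem_tr)
    have "b - a \<in> W" unfolding e(1) by (rule subspace_diff[OF assms(1) m(1,2)])
    moreover have "d - c \<in> W'" unfolding e(2) by (rule subspace_diff[OF assms(2) m(3,4)])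
    ultimately show ?thesis using h by blast
  qed
  ultimately show "perp xi (tr p W) (tr q W')" unfolding perp_def by blast
qed

end


context vector_space begin
lemma span_span_Un: "span (span A \<union> span B) = span (A \<union> B)"
  by (simp add: span_Un span_span)

lemma span_nz: "independent B \<Longrightarrow> finite B \<Longrightarrow> span B = {0} \<longleftrightarrow> card B = 0"
proof
  assume "independent B" "finite B" "span B = {0}"
  then have "B \<subseteq> {0}" using span_superset by blast
  then have "B = {}" using \<open>independent B\<close> dependent_zero by blast
  then show "card B = 0" by simp
next
  assume "independent B" "finite B" "card B = 0"
  then show "span B = {0}" by simp
qed
end

context bform begin

lemma join_pt: assumes A: "subspace A" shows "join scale {p} (tr p A) = tr p A"
proof -
  have "join scale {p} (tr p A) = tr p (span ({0} \<union> A))" using join_tr[OF subspace_single_0 A, of p] by (simp add: tr_0)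
  also have "span ({0} \<union> A) = A" using A by simp
  finally show ?thesis .
qed

lemma perp_pt: assumes "subspace A" shows "perp_x xi (tr p A) {p}"
proof -
  have "perp xi (tr p A) (tr p {0})" using perp_tr[OF assms subspace_single_0] by simp
  moreover have "p \<in> tr p A" using tr_p assms by blast
  ultimately show ?thesis unfolding perp_x_def tr_0 by blast
qed

lemma star_Y: assumes U: "subspace U" and W: "subspace W" and UW: "U \<inter> W = {0}"
  shows "perp_star scale xi (tr p U) (tr p W) \<longleftrightarrow> (U \<noteq> {0} \<and> W \<noteq> {0} \<and> (\<forall>a\<in>U. \<forall>b\<in>W. xi a b = 0))"
proof -
  have I: "tr p U \<inter> tr p W = {p}" using tr_inter UW tr_0 by metis
  show ?thesis
  proof
    assume S: "perp_star scale xi (tr p U) (tr p W)"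
    have "U \<noteq> {0}" using S I tr_0 unfolding perp_star_def by metis
    moreover have "W \<noteq> {0}" using S I tr_0 unfolding perp_star_def by metis
    moreover have "\<forall>a\<in>U. \<forall>b\<in>W. xi a b = 0"
    proof -
      obtain q Z1 Z2 where q: "q \<in> tr p U \<inter> tr p W" and Z: "is_sub scale Z1" "is_sub scale Z2" "q \<in> Z1" "q \<in> Z2"
        "perp_x xi Z1 Z2" "join scale (tr p U \<inter> tr p W) Z1 = tr p U" "join scale (tr p U \<inter> tr p W) Z2 = tr p W"
        using S unfolding perp_star_def perp_circ_def by blast
      have qp: "q = p" using q I by blast
      obtain A1 where A1: "subspace A1" "Z1 = tr p A1" using is_sub_at Z(1) Z(3) qp by blast
      obtain A2 where A2: "subspace A2" "Z2 = tr p A2" using is_sub_at Z(2) Z(4) qp by blast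
      have "tr p A1 = tr p U" using Z(6) A1 I join_pt by simp
      then have "A1 = U" by (rule tr_inj)
      moreover have "tr p A2 = tr p W" using Z(7) A2 I join_pt by simp
      then have "A2 = W" by (rule tr_inj)
      ultimately show ?thesis using Z(5) perp_tr A1 A2 unfolding perp_x_def by blast
    qed
    ultimately show "U \<noteq> {0} \<and> W \<noteq> {0} \<and> (\<forall>a\<in>U. \<forall>b\<in>W. xi a b = 0)" by blast
  next
    assume H: "U \<noteq> {0} \<and> W \<noteq> {0} \<and> (\<forall>a\<in>U. \<forall>b\<in>W. xi a b = 0)"
    have n1: "tr p U \<inter> tr p W \<noteq> tr p U"
    proof
      assume "tr p U \<inter> tr p W = tr p U"
      then have "tr p {0} = tr p U" using I by (simp add: tr_0)
      then have "{0} = U" by (rule tr_inj)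
      then show False using H by blast
    qed
    have n2: "tr p U \<inter> tr p W \<noteq> tr p W"
    proof
      assume "tr p U \<inter> tr p W = tr p W"
      then have "tr p {0} = tr p W" using I by (simp add: tr_0)
      then have "{0} = W" by (rule tr_inj)
      then show False using H by blast
    qed
    have pi: "p \<in> tr p U \<inter> tr p W" using I by blast
    have c1: "perp_x xi (tr p U) (tr p U \<inter> tr p W)" "perp_x xi (tr p W) (tr p U \<inter> tr p W)"
      unfolding I using perp_pt U W by blast+
    have c2: "perp_x xi (tr p U) (tr p W)" using perp_tr[OF U W] H I unfolding perp_x_def by blast
    have c3: "join scale (tr p U \<inter> tr p W) (tr p U) = tr p U" "join scale (tr p U \<inter> tr p W) (tr p W) = tr p W"
      unfolding I using join_pt U W by blast+
    have c4: "is_sub scale (tr p U)" "is_sub scale (tr p W)" "p \<in> tr p U" "p \<in> tr p W"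
      using is_sub_tr tr_p U W by blast+
    show "perp_star scale xi (tr p U) (tr p W)"
      unfolding perp_star_def perp_circ_def using n1 n2 pi c1 c2 c3 c4 by blast
  qed
qed

end


theorem lemma2p2:
  fixes scale :: "'a::field \<Rightarrow> 'b::ab_group_add \<Rightarrow> 'b"
    and xi :: "'b \<Rightarrow> 'b \<Rightarrow> 'a"
    and k1 k2 m :: nat
    and Y1 X2 :: "'b set"
  assumes "vector_space scale"
    and "sym_bilinear_form scale xi"
    and "nondegenerate_form xi"
    and "no_isotropic xi"
    and "k1 \<le> k2"
    and "m \<le> k1"
    and "dim_ge scale (k1 + k2 - m)"
    and "Y1 \<in> Hk scale (k1 - m)"
    and "X2 \<in> Hk scale k2"
    and "\<exists>p. Y1 \<inter> X2 = {p}"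
  shows "perp_star scale xi Y1 X2 \<longleftrightarrow>
         (\<forall>X1 \<in> Hk scale k1. Y1 \<subseteq> X1 \<and> X1 \<inter> X2 \<in> Hk scale m \<longrightarrow> perp_star scale xi X1 X2)"
proof -
  interpret bform scale xi using assms(1,2,4) by (simp add: bform_def bform_axioms_def)
  obtain p where p: "Y1 \<inter> X2 = {p}" using assms(10) by blast
  have pY: "p \<in> Y1" "p \<in> X2" using p by auto
  obtain B1 where B1: "finite B1" "independent B1" "card B1 = k1 - m" "Y1 = tr p (span B1)"
    using Hk_at[OF assms(8) pY(1)] by blast
  obtain B2 where B2: "finite B2" "independent B2" "card B2 = k2" "X2 = tr p (span B2)"
    using Hk_at[OF assms(9) pY(2)] by blast
  define U1 where "U1 = span B1"
  define W2 where "W2 = span B2"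
  have sU1: "subspace U1" and sW2: "subspace W2" unfolding U1_def W2_def by simp_all
  have UW: "U1 \<inter> W2 = {0}"
  proof -
    have "tr p (U1 \<inter> W2) = tr p {0}" using p B1(4) B2(4) tr_inter tr_0 unfolding U1_def W2_def by metis
    then show ?thesis by (rule tr_inj)
  qed
  have U0: "U1 \<noteq> {0} \<longleftrightarrow> m < k1" using span_nz[OF B1(2,1)] B1(3) assms(6) unfolding U1_def by auto
  have W0: "W2 \<noteq> {0} \<longleftrightarrow> 0 < k2" using span_nz[OF B2(2,1)] B2(3) unfolding W2_def by auto
  have orth_iff: "perp_star scale xi Y1 X2 \<longleftrightarrow> (m < k1 \<and> (\<forall>a\<in>U1. \<forall>b\<in>W2. xi a b = 0))"
    using star_Y[OF sU1 sW2 UW, of p] U0 W0 assms(5) B1(4) B2(4) unfolding U1_def W2_def by auto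
  have B1nz: "0 \<notin> B1" using B1(2) dependent_zero by blast
  have Y1e: "Y1 = tr p U1" "X2 = tr p W2" using B1(4) B2(4) U1_def W2_def by simp_all
  show ?thesis unfolding orth_iff
  proof
    assume H: "m < k1 \<and> (\<forall>a\<in>U1. \<forall>b\<in>W2. xi a b = 0)"
    show "\<forall>X1\<in>Hk scale k1. Y1 \<subseteq> X1 \<and> X1 \<inter> X2 \<in> Hk scale m \<longrightarrow> perp_star scale xi X1 X2"
    proof (intro ballI impI, elim conjE)
      fix X1 assume X1: "X1 \<in> Hk scale k1" "Y1 \<subseteq> X1" "X1 \<inter> X2 \<in> Hk scale m"
      have pX1: "p \<in> X1" using X1(2) pY by blast
      obtain B where B: "finite B" "independent B" "card B = k1" "X1 = tr p (span B)"
        using Hk_at[OF X1(1) pX1] by blast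
      obtain C where C: "finite C" "independent C" "card C = m" "X1 \<inter> X2 = tr p (span C)"
        using Hk_at[OF X1(3)] pX1 pY by blast
      define W1 where "W1 = span B"
      define D where "D = span C"
      have sW1: "subspace W1" and sD: "subspace D" unfolding W1_def D_def by simp_all
      have X1e: "X1 = tr p W1" "X1 \<inter> X2 = tr p D" using B(4) C(4) W1_def D_def by simp_all
      have D_eq: "D = W1 \<inter> W2"
      proof -
        have "tr p D = tr p (W1 \<inter> W2)" using X1e Y1e tr_inter by metis
        then show ?thesis by (rule tr_inj)
      qed
      have UW1: "U1 \<subseteq> W1" using X1(2) X1e Y1e tr_subset_iff by metis
      have ne1: "X1 \<inter> X2 \<noteq> X1"
      proof
        assume "X1 \<inter> X2 = X1"
        then have "tr p D = tr p W1" using X1e by simp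
        then have "D = W1" by (rule tr_inj)
        then have "card C = card B" using card_span_eq B(2) C(2) D_def W1_def by metis
        then show False using H B(3) C(3) by simp
      qed
      have ne2: "X1 \<inter> X2 \<noteq> X2"
      proof
        assume "X1 \<inter> X2 = X2"
        then have "tr p D = tr p W2" using X1e Y1e by simp
        then have "D = W2" by (rule tr_inj)
        then have "card C = card B2" using card_span_eq B2(2) C(2) D_def W2_def by metis
        then show False using H B2(3) C(3) assms(5) by simp
      qed
      define A2 where "A2 = {w \<in> W2. \<forall>d\<in>D. xi d w = 0}"
      have sA2: "subspace A2" unfolding A2_def
        by (rule subspaceI) (auto simp: xi_addr xi_scaler subspace_0[OF sW2] subspace_add[OF sW2] subspace_scale[OF sW2])
      have A2W: "A2 \<subseteq> W2" unfolding A2_def by blast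
      have DW2: "D \<subseteq> W2" "D \<subseteq> W1" using D_eq by blast+
      have join1: "join scale (X1 \<inter> X2) Y1 = X1"
      proof -
        have s1: "span B1 \<inter> span C \<subseteq> {0}" using UW DW2 U1_def D_def by blast
        have ind: "independent (B1 \<union> C)" using indep_union[OF B1(2) C(2) C(1) s1] .
        have disj: "B1 \<inter> C = {}" using s1 span_superset B1nz by blast
        have card: "card (B1 \<union> C) = card B" using card_Un_disjoint[OF B1(1) C(1) disj] B1(3) C(3) B(3) H by simp
        have sub: "B1 \<union> C \<subseteq> span B" using UW1 DW2 span_superset U1_def D_def W1_def by blast
        have "span (B1 \<union> C) = W1" using span_eq_card[OF ind B(1) sub card] W1_def by simp
        then have "span (D \<union> U1) = W1" using span_span_Un[of C B1] D_def U1_def by (simp add: Un_commute)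
        then show ?thesis using X1e Y1e join_tr[OF sD sU1, of p] by simp
      qed
      have join2: "join scale (X1 \<inter> X2) (tr p A2) = X2"
      proof -
        have "span (D \<union> A2) = W2"
        proof
          have "D \<union> A2 \<subseteq> W2" using DW2 A2W by blast
          then show "span (D \<union> A2) \<subseteq> W2" using span_minimal[OF _ sW2] by blast
          show "W2 \<subseteq> span (D \<union> A2)"
          proof
            fix w assume w: "w \<in> W2"
            obtain d where d: "d \<in> span C" "\<forall>c\<in>C. xi (w - d) c = 0" using proj[OF C(1)] by blast
            have "xi (w - d) x = 0" if "x \<in> D" for x using orth_span d(2) that D_def by blast
            then have "\<forall>x\<in>D. xi x (w - d) = 0" by (simp add: xi_sym[of _ "w - d"])
            moreover have "d \<in> W2" using d(1) DW2 D_def by blast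
            then have "w - d \<in> W2" using w subspace_diff[OF sW2] by blast
            ultimately have "w - d \<in> A2" unfolding A2_def by blast
            moreover have "d \<in> D" using d(1) D_def by simp
            ultimately have "d \<in> span (D \<union> A2)" "w - d \<in> span (D \<union> A2)" by (simp_all add: span_base)
            then have "d + (w - d) \<in> span (D \<union> A2)" by (rule span_add)
            then show "w \<in> span (D \<union> A2)" by simp
          qed
        qed
        then show ?thesis using X1e Y1e join_tr[OF sD sA2, of p] by simp
      qed
      have c1: "perp_x xi Y1 (X1 \<inter> X2)"
      proof -
        have "perp xi (tr p U1) (tr p D)" using perp_tr[OF sU1 sD] H DW2 by blast
        then show ?thesis unfolding perp_x_def using Y1e X1e pY pX1 by auto
      qed
      have c2: "perp_x xi (tr p A2) (X1 \<inter> X2)"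
      proof -
        have "\<forall>a\<in>A2. \<forall>b\<in>D. xi a b = 0" unfolding A2_def using xi_sym by auto
        then have "perp xi (tr p A2) (tr p D)" using perp_tr[OF sA2 sD] by blast
        then show ?thesis unfolding perp_x_def using X1e tr_p[OF sA2, of p] tr_p[OF sD, of p] by auto
      qed
      have c3: "perp_x xi Y1 (tr p A2)"
      proof -
        have "perp xi (tr p U1) (tr p A2)" using perp_tr[OF sU1 sA2] H A2W by blast
        then show ?thesis unfolding perp_x_def using Y1e pY tr_p[OF sA2] by auto
      qed
      have c4: "is_sub scale Y1" "is_sub scale (tr p A2)" "p \<in> tr p A2" "p \<in> X1 \<inter> X2"
        using is_sub_tr sU1 sA2 Y1e tr_p pX1 pY by auto
      show "perp_star scale xi X1 X2"
        unfolding perp_star_def perp_circ_def using ne1 ne2 c1 c2 c3 c4 join1 join2 pY by blast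
    qed
  next
    assume H: "\<forall>X1\<in>Hk scale k1. Y1 \<subseteq> X1 \<and> X1 \<inter> X2 \<in> Hk scale m \<longrightarrow> perp_star scale xi X1 X2"
    have km: "m < k1"
    proof (rule ccontr)
      assume "\<not> m < k1"
      then have k1m: "k1 = m" using assms(6) by simp
      have "m \<le> card B2" using B2(3) assms(5,6) by simp
      then obtain C where C: "C \<subseteq> B2" "card C = m" "finite C" by (rule obtain_subset_with_card_n)
      define X1 where "X1 = tr p (span C)"
      have X1H: "X1 \<in> Hk scale k1" unfolding X1_def
        using Hk_I[OF C(3) independent_mono[OF B2(2) C(1)]] C(2) k1m by simp
      have "B1 = {}" using B1(1,3) k1m by simp
      then have Yp: "Y1 = {p}" using B1(4) tr_0 by simp
      have pX1: "p \<in> X1" unfolding X1_def using tr_p by simp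
      have "span C \<subseteq> W2" unfolding W2_def using span_mono[OF C(1)] .
      then have "X1 \<subseteq> X2" unfolding X1_def Y1e using tr_mono by blast
      then have XX: "X1 \<inter> X2 = X1" by blast
      have "perp_star scale xi X1 X2" using H X1H Yp pX1 XX k1m by auto
      then show False using XX unfolding perp_star_def by blast
    qed
    have "\<forall>a\<in>U1. \<forall>b\<in>W2. xi a b = 0"
    proof (intro ballI)
      fix u w assume u: "u \<in> U1" and w: "w \<in> W2"
      show "xi u w = 0"
      proof (cases "w = 0")
        case True then show ?thesis by simp
      next
        case False
        have nz: "xi w w \<noteq> 0" using xi_self False by blast
        define f where "f b = b - scale (xi b w / xi w w) w" for b
        define F where "F = f ` B2"
        have fw: "xi (f b) w = 0" for b
          unfolding f_def xi_diffl xi_scalel using nz by simp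
        have wsp: "w \<in> W2" using w .
        have fW: "f b \<in> W2" if "b \<in> B2" for b
        proof -
          have "b \<in> W2" using that span_base W2_def by simp
          moreover have "scale (xi b w / xi w w) w \<in> W2" using subspace_scale[OF sW2 w] .
          ultimately show ?thesis unfolding f_def using subspace_diff[OF sW2] by blast
        qed
        obtain C' where C': "C' \<subseteq> F" "independent C'" "F \<subseteq> span C'"
          using maximal_independent_subset by blast
        have finF: "finite F" unfolding F_def using B2(1) by simp
        have finC': "finite C'" using finite_subset[OF C'(1) finF] .
        have "B2 \<subseteq> span (insert w C')"
        proof
          fix b assume b: "b \<in> B2"
          have "f b \<in> span C'" using C'(3) b F_def by blast
          then have "f b \<in> span (insert w C')" using span_mono[of C' "insert w C'"] by blast
          moreover have "scale (xi b w / xi w w) w \<in> span (insert w C')"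
            by (rule span_scale) (simp add: span_base)
          ultimately have "f b + scale (xi b w / xi w w) w \<in> span (insert w C')" by (rule span_add)
          then show "b \<in> span (insert w C')" unfolding f_def by simp
        qed
        then have "card B2 \<le> card (insert w C')"
          using independent_span_bound[OF _ B2(2)] finC' by blast
        also have "\<dots> \<le> card C' + 1" using card_insert_le_m1 finC' by (simp add: card_insert_if)
        finally have "m \<le> card C'" using B2(3) km assms(5) by simp
        then obtain C where C: "C \<subseteq> C'" "card C = m" "finite C" by (rule obtain_subset_with_card_n)
        have Cind: "independent C" using independent_mono[OF C'(2) C(1)] .
        have CF: "C \<subseteq> F" using C(1) C'(1) by blast
        have CW: "C \<subseteq> W2" using CF fW unfolding F_def by blast
        have Cw: "\<forall>c\<in>C. xi c w = 0" using CF fw unfolding F_def by blast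
        have spCW: "span C \<subseteq> W2" using span_minimal[OF CW sW2] .
        have s1: "span B1 \<inter> span C \<subseteq> {0}" using UW spCW U1_def by blast
        have ind: "independent (B1 \<union> C)" using indep_union[OF B1(2) Cind C(3) s1] .
        have disj: "B1 \<inter> C = {}" using s1 span_superset B1nz by blast
        have card: "card (B1 \<union> C) = k1" using card_Un_disjoint[OF B1(1) C(3) disj] B1(3) C(2) km by simp
        define W1 where "W1 = span (B1 \<union> C)"
        define D where "D = span C"
        have sW1: "subspace W1" and sD: "subspace D" unfolding W1_def D_def by simp_all
        define X1 where "X1 = tr p W1"
        have X1H: "X1 \<in> Hk scale k1" unfolding X1_def W1_def
          using Hk_I[OF _ ind card] B1(1) C(3) by simp
        have UW1: "U1 \<subseteq> W1" unfolding U1_def W1_def by (rule span_mono) blast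
        have Y1X1: "Y1 \<subseteq> X1" unfolding X1_def Y1e using tr_mono[OF UW1] .
        have int: "W1 \<inter> W2 = D"
        proof
          show "W1 \<inter> W2 \<subseteq> D"
          proof
            fix x assume x: "x \<in> W1 \<inter> W2"
            then obtain a b where ab: "a \<in> span B1" "b \<in> span C" "x = a + b"
              unfolding W1_def using span_Un by blast
            have "b \<in> W2" using ab(2) spCW by blast
            then have "x - b \<in> W2" using x subspace_diff[OF sW2] by blast
            then have "a \<in> W2" using ab(3) by simp
            then have "a = 0" using UW ab(1) U1_def by blast
            then show "x \<in> D" using ab D_def by simp
          qed
          show "D \<subseteq> W1 \<inter> W2" unfolding D_def W1_def using spCW span_mono[of C "B1 \<union> C"] by blast
        qed
        have X1X2: "X1 \<inter> X2 = tr p D" unfolding X1_def Y1e tr_inter int ..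
        have "X1 \<inter> X2 \<in> Hk scale m" unfolding X1X2 D_def using Hk_I[OF C(3) Cind C(2)] .
        then have S: "perp_star scale xi X1 X2" using H X1H Y1X1 by blast
        then obtain q Z1 Z2 where q: "q \<in> X1 \<inter> X2" and Z: "is_sub scale Z1" "is_sub scale Z2" "q \<in> Z1" "q \<in> Z2"
          "perp_x xi Z1 (X1 \<inter> X2)" "perp_x xi Z2 (X1 \<inter> X2)" "perp_x xi Z1 Z2"
          "join scale (X1 \<inter> X2) Z1 = X1" "join scale (X1 \<inter> X2) Z2 = X2"
          unfolding perp_star_def perp_circ_def by blast
        have qD: "tr q D = X1 \<inter> X2" using tr_rebase[OF sD] q X1X2 by simp
        have qW1: "tr q W1 = X1" using tr_rebase[OF sW1] q X1_def by simp
        have qW2: "tr q W2 = X2" using tr_rebase[OF sW2] q Y1e by simp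
        obtain A1 where A1: "subspace A1" "Z1 = tr q A1" using is_sub_at Z(1) Z(3) by blast
        obtain A2 where A2: "subspace A2" "Z2 = tr q A2" using is_sub_at Z(2) Z(4) by blast
        have "tr q (span (D \<union> A1)) = tr q W1"
          using Z(8) join_tr[OF sD A1(1), of q] qD qW1 A1(2) by simp
        then have J1: "span (D \<union> A1) = W1" by (rule tr_inj)
        have "tr q (span (D \<union> A2)) = tr q W2"
          using Z(9) join_tr[OF sD A2(1), of q] qD qW2 A2(2) by simp
        then have J2: "span (D \<union> A2) = W2" by (rule tr_inj)
        have o1: "\<forall>a\<in>A1. \<forall>b\<in>D. xi a b = 0"
          using Z(5) perp_tr[OF A1(1) sD] A1(2) qD unfolding perp_x_def by metis
        have o3: "\<forall>a\<in>A1. \<forall>b\<in>A2. xi a b = 0"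
          using Z(7) perp_tr[OF A1(1) A2(1)] A1(2) A2(2) unfolding perp_x_def by metis
        have "u \<in> span (D \<union> A1)" using u UW1 J1 by blast
        then obtain d1 a1 where da1: "d1 \<in> D" "a1 \<in> A1" "u = d1 + a1" using span_sub_Un[OF sD A1(1)] by blast
        have "w \<in> span (D \<union> A2)" using w J2 by blast
        then obtain d2 a2 where da2: "d2 \<in> D" "a2 \<in> A2" "w = d2 + a2" using span_sub_Un[OF sD A2(1)] by blast
        have "xi w d1 = 0" using orth_span[of C w d1] Cw da1(1) D_def by (simp add: xi_sym[of w])
        then have e1: "xi d1 w = 0" by (simp add: xi_sym[of d1])
        have e2: "xi a1 w = 0" using o1 o3 da1(2) da2 by (simp add: xi_addr)
        show ?thesis using e1 e2 da1(3) by (simp add: xi_addl)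
      qed
    qed
    then show "m < k1 \<and> (\<forall>a\<in>U1. \<forall>b\<in>W2. xi a b = 0)" using km by blast
  qed
qed


end
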